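(* Let $Q\in\mathbb{R}^{n\times n}$ be symmetric positive definite, $h\in\mathbb{R}^n$, $\delta>0$, and $F(x)=\tfrac12x^TQx-x^Th$. Let $x^0\in\mathbb{R}^n$ have all entries positive and define the sequence $(x^k)$ by \[ x^{k+1}_i=x^k_i\,\frac{2(Q^-x^k)_i+h_i^++\delta}{(|Q|x^k)_i+h_i^-+\delta},\quad i=1,\dots,n . \] Then every $x^k$ has all entries positive, $F(x^{k+1})\le F(x^k)$ for all $k$, with strict inequality whenever $x^{k+1}\neq x^k$; and the sequence $F(x^k)$ converges to the global minimum of $F$ over $\{x\in\mathbb{R}^n: x\ge 0\}$, which is attained at the stationary point of the iteration.
   Context: For a matrix $M$, $M^+=\max(M,0)$ and $M^-=\max(-M,0)$ entrywise, and $|M|=M^++M^-$; for a vector $h$, $h^+=\max(h,0)$, $h^-=\max(-h,0)$ entrywise. The problem considered is the nonnegative quadratic program $\min F(x)$ subject to $x\ge 0$ (entrywise). *)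

theory Defs
  imports "HOL-Analysis.Analysis"
begin

definition mat_pos :: "real^'n^'m \<Rightarrow> real^'n^'m" where
  "mat_pos M = (\<chi> i j. max (M $ i $ j) 0)"

definition mat_neg :: "real^'n^'m \<Rightarrow> real^'n^'m" where
  "mat_neg M = (\<chi> i j. max (- (M $ i $ j)) 0)"

definition mat_abs :: "real^'n^'m \<Rightarrow> real^'n^'m" where
  "mat_abs M = mat_pos M + mat_neg M"

definition vec_pos :: "real^'n \<Rightarrow> real^'n" where
  "vec_pos h = (\<chi> i. max (h $ i) 0)"

definition vec_neg :: "real^'n \<Rightarrow> real^'n" where
  "vec_neg h = (\<chi> i. max (- (h $ i)) 0)"

definition pos_def_mat :: "real^'n^'n \<Rightarrow> bool" where
  "pos_def_mat Q \<longleftrightarrow> transpose Q = Q \<and> (\<forall>x. x \<noteq> 0 \<longrightarrow> x \<bullet> (Q *v x) > 0)"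

definition qp_obj :: "real^'n^'n \<Rightarrow> real^'n \<Rightarrow> real^'n \<Rightarrow> real" where
  "qp_obj Q h x = (1/2) * (x \<bullet> (Q *v x)) - x \<bullet> h"

definition mu_step :: "real^'n^'n \<Rightarrow> real^'n \<Rightarrow> real \<Rightarrow> real^'n \<Rightarrow> real^'n" where
  "mu_step Q h \<delta> x = (\<chi> i. x $ i *
      ((2 * (mat_neg Q *v x) $ i + vec_pos h $ i + \<delta>) /
       ((mat_abs Q *v x) $ i + vec_neg h $ i + \<delta>)))"

end

theory Submission
  imports Defs "HOL-Analysis.Analysis"
begin

definition gr :: "real^'n^'n \<Rightarrow> real^'n \<Rightarrow> real^'n \<Rightarrow> real^'n" where
  "gr Q h x = Q *v x - h"
definition numr :: "real^'n^'n \<Rightarrow> real^'n \<Rightarrow> real \<Rightarrow> real^'n \<Rightarrow> real^'n" where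
  "numr Q h d x = (\<chi> i. 2 * (mat_neg Q *v x) $ i + vec_pos h $ i + d)"
definition denr :: "real^'n^'n \<Rightarrow> real^'n \<Rightarrow> real \<Rightarrow> real^'n \<Rightarrow> real^'n" where
  "denr Q h d x = (\<chi> i. (mat_abs Q *v x) $ i + vec_neg h $ i + d)"

lemma mu_step_nth: "mu_step Q h d x $ i = x $ i * (numr Q h d x $ i / denr Q h d x $ i)"
  by (simp add: mu_step_def numr_def denr_def)

lemma mat_abs_nth: "mat_abs Q $ i $ j = \<bar>Q $ i $ j\<bar>"
  by (simp add: mat_abs_def mat_pos_def mat_neg_def)

lemma num_minus_den: "numr Q h d x $ i - denr Q h d x $ i = - (gr Q h x $ i)"
proof -
  have a: "2 * (mat_neg Q *v x) $ i - (mat_abs Q *v x) $ i = - (Q *v x) $ i"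
  proof -
    have "2 * (mat_neg Q *v x) $ i - (mat_abs Q *v x) $ i
       = (\<Sum>j\<in>UNIV. (2 * max (- (Q$i$j)) 0 - \<bar>Q$i$j\<bar>) * x $ j)"
      by (simp add: matrix_vector_mult_def mat_abs_nth mat_neg_def sum_subtractf[symmetric] sum_distrib_left algebra_simps)
    also have "\<dots> = (\<Sum>j\<in>UNIV. - (Q$i$j * x $ j))"
      by (rule sum.cong) (auto simp: max_def abs_if)
    finally show ?thesis by (simp add: matrix_vector_mult_def sum_negf)
  qed
  have b: "vec_pos h $ i - vec_neg h $ i = h $ i" by (simp add: vec_pos_def vec_neg_def max_def)
  from a b have "2 * (mat_neg Q *v x) $ i - (mat_abs Q *v x) $ i + vec_pos h $ i - vec_neg h $ i
        = - ((Q *v x) $ i - h $ i)" by simp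
  thus ?thesis by (simp add: numr_def denr_def gr_def)
qed

lemma den_ge: assumes "\<forall>j. x $ j \<ge> 0" shows "denr Q h d x $ i \<ge> d"
proof -
  have "(mat_abs Q *v x) $ i \<ge> 0" using assms
    by (simp add: matrix_vector_mult_def mat_abs_nth sum_nonneg)
  moreover have "vec_neg h $ i \<ge> 0" by (simp add: vec_neg_def)
  ultimately show ?thesis by (simp add: denr_def)
qed

lemma num_ge: assumes "\<forall>j. x $ j \<ge> 0" shows "numr Q h d x $ i \<ge> d"
proof -
  have "(mat_neg Q *v x) $ i \<ge> 0" using assms
    by (simp add: matrix_vector_mult_def mat_neg_def sum_nonneg)
  moreover have "vec_pos h $ i \<ge> 0" by (simp add: vec_pos_def)
  ultimately show ?thesis by (simp add: numr_def)
qed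

lemma step_pos: assumes "\<forall>j. x $ j > 0" "d > 0" shows "mu_step Q h d x $ i > 0"
proof -
  have "\<forall>j. x $ j \<ge> 0" using assms by (simp add: less_imp_le)
  then have "numr Q h d x $ i > 0" "denr Q h d x $ i > 0" using num_ge den_ge assms(2)
    by (metis order_less_le_trans)+
  thus ?thesis using assms by (simp add: mu_step_nth)
qed


lemma sym_entry: "transpose Q = Q \<Longrightarrow> Q $ i $ j = Q $ j $ i"
proof -
  assume "transpose Q = Q"
  hence "transpose Q $ i $ j = Q $ i $ j" by simp
  thus ?thesis by (simp add: transpose_def)
qed

lemma qp_expand:
  assumes "transpose Q = Q"
  shows "qp_obj Q h (x + d) = qp_obj Q h x + gr Q h x \<bullet> d + 1/2 * (d \<bullet> (Q *v d))"
proof -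
  have s: "x \<bullet> (Q *v d) = (Q *v x) \<bullet> d"
    by (metis assms dot_lmul_matrix inner_commute transpose_matrix_vector)
  have t: "d \<bullet> (Q *v x) = (Q *v x) \<bullet> d" by (rule inner_commute)
  have e: "(x + d) \<bullet> (Q *v (x + d)) = x \<bullet> (Q *v x) + x \<bullet> (Q *v d) + d \<bullet> (Q *v x) + d \<bullet> (Q *v d)"
    by (simp add: matrix_vector_right_distrib inner_add_left inner_add_right)
  have f: "(x + d) \<bullet> h = x \<bullet> h + d \<bullet> h" by (simp add: inner_add_left)
  have g: "gr Q h x \<bullet> d = (Q *v x) \<bullet> d - d \<bullet> h"
    by (simp add: gr_def inner_diff_left inner_commute[of h d])
  show ?thesis unfolding qp_obj_def using e f g s t by simp
qed

lemma scalar_amgm: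
  fixes a b q u w :: real assumes "a > 0" "b > 0"
  shows "2*q*u*w \<le> \<bar>q\<bar> * (b*u^2/a + a*w^2/b)"
proof -
  have "0 \<le> (b*\<bar>u\<bar> - a*\<bar>w\<bar>)^2" by simp
  hence "2*\<bar>u*w\<bar>*(a*b) \<le> b^2*u^2 + a^2*w^2"
    by (simp add: power2_eq_square algebra_simps abs_mult)
  hence "2*\<bar>u*w\<bar> \<le> b*u^2/a + a*w^2/b" using assms
    by (simp add: field_simps power2_eq_square)
  hence "\<bar>q\<bar> * (2*\<bar>u*w\<bar>) \<le> \<bar>q\<bar> * (b*u^2/a + a*w^2/b)"
    by (rule mult_left_mono) auto
  moreover have "2*q*u*w \<le> \<bar>q\<bar> * (2*\<bar>u*w\<bar>)"
  proof -
    have "q*(u*w) \<le> \<bar>q*(u*w)\<bar>" by (rule abs_ge_self)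
    also have "\<dots> = \<bar>q\<bar> * \<bar>u*w\<bar>" by (rule abs_mult)
    finally show ?thesis by (simp add: mult.assoc)
  qed
  ultimately show ?thesis by linarith
qed

lemma quad_sum: "d \<bullet> (Q *v d) = (\<Sum>i\<in>UNIV. \<Sum>j\<in>UNIV. d$i * Q$i$j * d$j)"
  by (simp add: inner_vec_def matrix_vector_mult_def sum_distrib_left mult.assoc)

lemma amgm:
  assumes "transpose Q = Q" "\<forall>j. x $ j > 0"
  shows "d \<bullet> (Q *v d) \<le> (\<Sum>i\<in>UNIV. (mat_abs Q *v x) $ i * ((d$i)^2 / x$i))"
proof -
  let ?A = "\<Sum>i\<in>UNIV. \<Sum>j\<in>UNIV. \<bar>Q$i$j\<bar> * (x$j * (d$i)^2 / x$i)"
  let ?B = "\<Sum>i\<in>UNIV. \<Sum>j\<in>UNIV. \<bar>Q$i$j\<bar> * (x$i * (d$j)^2 / x$j)"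
  have "2 * (d \<bullet> (Q *v d)) = (\<Sum>i\<in>UNIV. \<Sum>j\<in>UNIV. 2 * Q$i$j * d$i * d$j)"
    by (simp add: quad_sum sum_distrib_left algebra_simps)
  also have "\<dots> \<le> (\<Sum>i\<in>UNIV. \<Sum>j\<in>UNIV. \<bar>Q$i$j\<bar> * (x$j * (d$i)^2 / x$i + x$i * (d$j)^2 / x$j))"
    by (intro sum_mono scalar_amgm) (use assms in auto)
  also have "\<dots> = ?A + ?B"
    by (simp add: distrib_left sum.distrib)
  also have "?B = ?A"
    by (subst sum.swap) (simp add: sym_entry[OF assms(1)])
  also have "?A = (\<Sum>i\<in>UNIV. (mat_abs Q *v x) $ i * ((d$i)^2 / x$i))"
    by (simp add: matrix_vector_mult_def mat_abs_nth sum_distrib_right sum_divide_distrib times_divide_eq_right mult.assoc)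
  finally show ?thesis by simp
qed


lemma descent:
  fixes Q :: "real^'n^'n"
  assumes sym: "transpose Q = Q" and dpos: "\<delta> > 0" and xpos: "\<forall>j. x $ j > 0"
  shows "qp_obj Q h (mu_step Q h \<delta> x) + \<delta> * (\<Sum>i\<in>UNIV. (mu_step Q h \<delta> x $ i - x $ i)^2 / x $ i)
         \<le> qp_obj Q h x"
proof -
  define d where "d = mu_step Q h \<delta> x - x"
  define D where "D = denr Q h \<delta> x"
  define A where "A = mat_abs Q *v x"
  have x0: "\<forall>j. x $ j \<ge> 0" using xpos by (simp add: less_imp_le)
  have Dge: "D $ i \<ge> \<delta>" for i using den_ge[OF x0] by (simp add: D_def)
  have AD: "A $ i \<le> D $ i - \<delta>" for i
    by (simp add: A_def D_def denr_def vec_neg_def)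
  have di: "d $ i = - x $ i * gr Q h x $ i / D $ i" for i
  proof -
    have p: "D $ i > 0" using Dge[of i] dpos by linarith
    have N: "numr Q h \<delta> x $ i = D $ i - gr Q h x $ i"
      using num_minus_den[of Q h \<delta> x i] by (simp add: D_def)
    have e: "d $ i = x $ i * ((D $ i - gr Q h x $ i) / D $ i) - x $ i"
      using N by (simp add: d_def mu_step_nth D_def[symmetric])
    show ?thesis using e p by (simp add: field_simps)
  qed
  have gd: "gr Q h x \<bullet> d = (\<Sum>i\<in>UNIV. - (D $ i * ((d $ i)^2 / x $ i)))"
    unfolding inner_vec_def inner_real_def
  proof (rule sum.cong[OF refl])
    fix i :: 'n
    have "D $ i > 0" using Dge[of i] dpos by linarith
    moreover have "x $ i > 0" using xpos by simp
    ultimately show "gr Q h x $ i * d $ i = - (D $ i * ((d $ i)^2 / x $ i))"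
      by (simp add: di field_simps power2_eq_square)
  qed
  have m: "mu_step Q h \<delta> x = x + d" by (simp add: d_def)
  have "qp_obj Q h (mu_step Q h \<delta> x) = qp_obj Q h x + gr Q h x \<bullet> d + 1/2 * (d \<bullet> (Q *v d))"
    unfolding m by (rule qp_expand[OF sym])
  also have "\<dots> \<le> qp_obj Q h x + (\<Sum>i\<in>UNIV. - (D $ i * ((d $ i)^2 / x $ i)))
                 + 1/2 * (\<Sum>i\<in>UNIV. A $ i * ((d$i)^2 / x$i))"
    using amgm[OF sym xpos, of d] gd by (simp add: A_def)
  also have "\<dots> \<le> qp_obj Q h x - \<delta> * (\<Sum>i\<in>UNIV. (d $ i)^2 / x $ i)"
  proof -
    have "(\<Sum>i\<in>UNIV. - (D $ i * ((d $ i)^2 / x $ i))) + 1/2 * (\<Sum>i\<in>UNIV. A $ i * ((d$i)^2 / x$i))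
        = (\<Sum>i\<in>UNIV. 1/2 * (A $ i * ((d$i)^2 / x$i)) + - (D $ i * ((d $ i)^2 / x $ i)))"
      unfolding sum.distrib sum_distrib_left by (rule add.commute)
    also have "\<dots> = (\<Sum>i\<in>UNIV. (A $ i / 2 - D $ i) * ((d $ i)^2 / x $ i))"
    proof (rule sum.cong[OF refl])
      fix i
      have "\<And>a b t::real. 1/2 * (a * t) + - (b * t) = (a/2 - b) * t" by (simp add: algebra_simps)
      thus "1/2 * (A $ i * ((d$i)^2 / x$i)) + - (D $ i * ((d $ i)^2 / x $ i))
          = (A $ i / 2 - D $ i) * ((d $ i)^2 / x $ i)" by blast
    qed
    also have "\<dots> \<le> (\<Sum>i\<in>UNIV. (- \<delta>) * ((d $ i)^2 / x $ i))"
    proof (rule sum_mono)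
      fix i
      have "(d $ i)^2 / x $ i \<ge> 0" using xpos by (simp add: less_imp_le)
      moreover have "A $ i / 2 - D $ i \<le> - \<delta>" using AD[of i] Dge[of i] by linarith
      ultimately show "(A $ i / 2 - D $ i) * ((d $ i)^2 / x $ i) \<le> (- \<delta>) * ((d $ i)^2 / x $ i)"
        by (rule mult_right_mono[rotated])
    qed
    also have "\<dots> = - \<delta> * (\<Sum>i\<in>UNIV. (d $ i)^2 / x $ i)" by (simp add: sum_distrib_left)
    finally show ?thesis by linarith
  qed
  finally show ?thesis by (simp add: d_def)
qed

lemma strict_descent:
  assumes sym: "transpose Q = Q" and dpos: "\<delta> > 0" and xpos: "\<forall>j. x $ j > 0"
    and ne: "mu_step Q h \<delta> x \<noteq> x"
  shows "qp_obj Q h (mu_step Q h \<delta> x) < qp_obj Q h x"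
proof -
  obtain k where k: "mu_step Q h \<delta> x $ k \<noteq> x $ k" using ne by (metis vec_eq_iff)
  have "(\<Sum>i\<in>UNIV. (mu_step Q h \<delta> x $ i - x $ i)^2 / x $ i) > 0"
  proof (rule sum_pos2[where i=k])
    show "(mu_step Q h \<delta> x $ k - x $ k)^2 / x $ k > 0" using k xpos by simp
    show "\<And>i. i \<in> UNIV \<Longrightarrow> 0 \<le> (mu_step Q h \<delta> x $ i - x $ i)^2 / x $ i"
      using xpos by (simp add: less_imp_le)
  qed auto
  with descent[OF assms(1-3), of h] dpos show ?thesis
    by (smt (verit) mult_pos_pos)
qed


lemma coercive:
  fixes Q :: "real^'n^'n"
  assumes "pos_def_mat Q"
  shows "\<exists>l>0. \<forall>x. x \<bullet> (Q *v x) \<ge> l * (norm x)^2"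
proof -
  let ?f = "\<lambda>x::real^'n. x \<bullet> (Q *v x)"
  have pd: "\<And>x. x \<noteq> 0 \<Longrightarrow> ?f x > 0" using assms by (simp add: pos_def_mat_def)
  have ne: "sphere (0::real^'n) 1 \<noteq> {}" by simp
  have cont: "continuous_on (sphere 0 1) ?f"
    by (intro continuous_intros continuous_on_compose2[OF linear_continuous_on[OF matrix_vector_mul_bounded_linear]]) auto
  obtain u where u: "u \<in> sphere 0 1" and umin: "\<forall>y\<in>sphere 0 1. ?f u \<le> ?f y"
    using continuous_attains_inf[OF compact_sphere ne cont] by blast
  have "u \<noteq> 0" using u by auto
  hence lpos: "?f u > 0" by (rule pd)
  have "?f x \<ge> ?f u * (norm x)^2" for x
  proof (cases "x = 0")
    case True thus ?thesis by simp
  next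
    case False
    define v where "v = (1 / norm x) *\<^sub>R x"
    have v: "v \<in> sphere 0 1" using False by (simp add: v_def)
    have xv: "x = norm x *\<^sub>R v" using False by (simp add: v_def)
    have "?f x = (norm x)^2 * ?f v"
      by (subst xv, subst xv) (simp add: matrix_vector_mult_scaleR power2_eq_square)
    moreover have "?f u \<le> ?f v" using umin v by blast
    hence "?f u * (norm x)^2 \<le> ?f v * (norm x)^2" by (rule mult_right_mono) simp
    moreover have "(norm x)^2 * ?f v = ?f v * (norm x)^2" by (rule mult.commute)
    ultimately show ?thesis by linarith
  qed
  thus ?thesis using lpos by blast
qed

lemma fixed_iff:
  assumes "\<delta> > 0" "\<forall>j. p $ j \<ge> 0"
  shows "mu_step Q h \<delta> p $ i = p $ i \<longleftrightarrow> (p $ i = 0 \<or> gr Q h p $ i = 0)"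
proof -
  have Dp: "denr Q h \<delta> p $ i > 0" using den_ge[OF assms(2)] assms(1) by (metis order_less_le_trans)
  have N: "numr Q h \<delta> p $ i = denr Q h \<delta> p $ i - gr Q h p $ i"
    using num_minus_den[of Q h \<delta> p i] by simp
  show ?thesis using Dp unfolding mu_step_nth N
    by (auto simp: field_simps)
qed

lemma fixed_iff_vec:
  assumes "\<delta> > 0" "\<forall>j. p $ j \<ge> 0"
  shows "mu_step Q h \<delta> p = p \<longleftrightarrow> (\<forall>i. p $ i = 0 \<or> gr Q h p $ i = 0)"
  using fixed_iff[OF assms] by (simp add: vec_eq_iff)

lemma psd:
  assumes "pos_def_mat Q" shows "e \<bullet> (Q *v e) \<ge> 0"
  using assms by (cases "e = 0") (auto simp: pos_def_mat_def less_imp_le)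

lemma finite_fixed:
  fixes Q :: "real^'n^'n"
  assumes pd: "pos_def_mat Q" and dpos: "\<delta> > 0"
  shows "finite {p. (\<forall>i. p $ i \<ge> 0) \<and> mu_step Q h \<delta> p = p}"
proof (rule inj_on_finite[where f = "\<lambda>p. {i. p $ i \<noteq> 0}" and B = "Pow UNIV"])
  show "finite (Pow (UNIV :: 'n set))" by simp
  show "(\<lambda>p. {i. p $ i \<noteq> 0}) ` {p. (\<forall>i. p $ i \<ge> 0) \<and> mu_step Q h \<delta> p = p} \<subseteq> Pow UNIV" by simp
  show "inj_on (\<lambda>p. {i. p $ i \<noteq> 0}) {p. (\<forall>i. p $ i \<ge> 0) \<and> mu_step Q h \<delta> p = p}"
  proof (rule inj_onI)
    fix p q assume p: "p \<in> {p. (\<forall>i. p $ i \<ge> 0) \<and> mu_step Q h \<delta> p = p}"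
      and q: "q \<in> {p. (\<forall>i. p $ i \<ge> 0) \<and> mu_step Q h \<delta> p = p}"
      and sup: "{i. p $ i \<noteq> 0} = {i. q $ i \<noteq> 0}"
    have fp: "\<forall>i. p $ i = 0 \<or> gr Q h p $ i = 0" using p fixed_iff_vec[OF dpos] by blast
    have fq: "\<forall>i. q $ i = 0 \<or> gr Q h q $ i = 0" using q fixed_iff_vec[OF dpos] by blast
    define e where "e = p - q"
    have z: "e $ i * (Q *v e) $ i = 0" for i
    proof (cases "p $ i = 0")
      case True
      hence "q $ i = 0" using sup by blast
      thus ?thesis using True by (simp add: e_def)
    next
      case False
      hence "q $ i \<noteq> 0" using sup by blast
      hence "gr Q h p $ i = 0" "gr Q h q $ i = 0" using False fp fq by auto
      hence "(Q *v e) $ i = 0" by (simp add: e_def gr_def matrix_vector_mult_diff_distrib)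
      thus ?thesis by simp
    qed
    have "e \<bullet> (Q *v e) = 0" by (simp add: inner_vec_def inner_real_def z)
    moreover have "e \<noteq> 0 \<Longrightarrow> e \<bullet> (Q *v e) > 0" using pd unfolding pos_def_mat_def by blast
    ultimately have "e = 0" by fastforce
    thus "p = q" by (simp add: e_def)
  qed
qed

lemma kkt_min:
  fixes Q :: "real^'n^'n"
  assumes pd: "pos_def_mat Q" and kkt: "\<forall>i. (p $ i = 0 \<and> gr Q h p $ i \<ge> 0) \<or> gr Q h p $ i = 0"
    and y: "\<forall>i. y $ i \<ge> 0"
  shows "qp_obj Q h p \<le> qp_obj Q h y"
proof -
  have sym: "transpose Q = Q" using pd by (simp add: pos_def_mat_def)
  have "qp_obj Q h (p + (y - p)) = qp_obj Q h p + gr Q h p \<bullet> (y - p) + 1/2 * ((y - p) \<bullet> (Q *v (y - p)))"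
    by (rule qp_expand[OF sym])
  hence "qp_obj Q h y = qp_obj Q h p + gr Q h p \<bullet> (y - p) + 1/2 * ((y - p) \<bullet> (Q *v (y - p)))"
    by simp
  moreover have "gr Q h p \<bullet> (y - p) \<ge> 0"
    unfolding inner_vec_def inner_real_def
  proof (rule sum_nonneg)
    fix i
    have "(p $ i = 0 \<and> gr Q h p $ i \<ge> 0) \<or> gr Q h p $ i = 0" using kkt by blast
    moreover have "y $ i \<ge> 0" using y by blast
    ultimately show "0 \<le> gr Q h p $ i * (y - p) $ i" by auto
  qed
  moreover have "(y - p) \<bullet> (Q *v (y - p)) \<ge> 0" by (rule psd[OF pd])
  ultimately show ?thesis by linarith
qed

lemma lim_num:
  fixes Q :: "real^'n^'n"
  assumes "(s \<longlongrightarrow> p) F"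
  shows "((\<lambda>k. numr Q h d (s k) $ i) \<longlongrightarrow> numr Q h d p $ i) F"
    and "((\<lambda>k. denr Q h d (s k) $ i) \<longlongrightarrow> denr Q h d p $ i) F"
proof -
  have a: "((\<lambda>k. M *v s k) \<longlongrightarrow> M *v p) F" for M :: "real^'n^'n"
    by (rule bounded_linear.tendsto[OF matrix_vector_mul_bounded_linear assms])
  show "((\<lambda>k. numr Q h d (s k) $ i) \<longlongrightarrow> numr Q h d p $ i) F"
    unfolding numr_def vec_lambda_beta by (intro tendsto_intros a)
  show "((\<lambda>k. denr Q h d (s k) $ i) \<longlongrightarrow> denr Q h d p $ i) F"
    unfolding denr_def vec_lambda_beta by (intro tendsto_intros a)
qed

lemma lim_ratio:
  assumes "(s \<longlongrightarrow> p) F" "d > 0" "\<forall>j. p $ j \<ge> 0"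
  shows "((\<lambda>k. numr Q h d (s k) $ i / denr Q h d (s k) $ i) \<longlongrightarrow> numr Q h d p $ i / denr Q h d p $ i) F"
proof -
  have "denr Q h d p $ i \<noteq> 0" using den_ge[OF assms(3)] assms(2) by (metis less_le_not_le)
  thus ?thesis by (intro tendsto_divide lim_num[OF assms(1)])
qed

lemma lim_step:
  assumes "(s \<longlongrightarrow> p) F" "d > 0" "\<forall>j. p $ j \<ge> 0"
  shows "((\<lambda>k. mu_step Q h d (s k)) \<longlongrightarrow> mu_step Q h d p) F"
proof (rule vec_tendstoI)
  fix i
  show "((\<lambda>k. mu_step Q h d (s k) $ i) \<longlongrightarrow> mu_step Q h d p $ i) F"
    unfolding mu_step_nth
    by (intro tendsto_mult lim_ratio[OF assms] tendsto_vec_nth assms(1))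
qed

lemma lim_obj:
  assumes "(s \<longlongrightarrow> p) F"
  shows "((\<lambda>k. qp_obj Q h (s k)) \<longlongrightarrow> qp_obj Q h p) F"
proof -
  have a: "((\<lambda>k. Q *v s k) \<longlongrightarrow> Q *v p) F"
    by (rule bounded_linear.tendsto[OF matrix_vector_mul_bounded_linear assms])
  show ?thesis unfolding qp_obj_def by (intro tendsto_intros a assms)
qed


lemma sep_finite:
  fixes P :: "'a::metric_space set"
  assumes "finite P"
  shows "\<exists>r>0. \<forall>p\<in>P. \<forall>q\<in>P. p \<noteq> q \<longrightarrow> r \<le> dist p q"
proof -
  define W where "W = (\<lambda>(p,q). dist p q) ` {(p,q). p \<in> P \<and> q \<in> P \<and> p \<noteq> q}"
  have fW: "finite W" unfolding W_def
    by (rule finite_imageI, rule finite_subset[of _ "P \<times> P"]) (use assms in auto)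
  have pW: "\<forall>w\<in>W. w > 0" unfolding W_def by auto
  show ?thesis
  proof (cases "W = {}")
    case True
    hence "\<forall>p\<in>P. \<forall>q\<in>P. p \<noteq> q \<longrightarrow> 1 \<le> dist p q" unfolding W_def by auto
    thus ?thesis using zero_less_one by blast
  next
    case False
    have "Min W > 0" using fW False pW by simp
    moreover have "\<forall>p\<in>P. \<forall>q\<in>P. p \<noteq> q \<longrightarrow> Min W \<le> dist p q"
      using fW unfolding W_def by (auto intro!: Min_le)
    ultimately show ?thesis by blast
  qed
qed

theorem theorem1:
  fixes Q :: "real^'n^'n" and h :: "real^'n" and \<delta> :: real
    and x :: "nat \<Rightarrow> real^'n"
  assumes "pos_def_mat Q"
    and "\<delta> > 0"
    and "\<forall>i. x 0 $ i > 0"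
    and "\<forall>k. x (Suc k) = mu_step Q h \<delta> (x k)"
  shows "(\<forall>k i. x k $ i > 0)
    \<and> (\<forall>k. qp_obj Q h (x (Suc k)) \<le> qp_obj Q h (x k))
    \<and> (\<forall>k. x (Suc k) \<noteq> x k \<longrightarrow> qp_obj Q h (x (Suc k)) < qp_obj Q h (x k))
    \<and> (\<exists>xs. (\<forall>i. xs $ i \<ge> 0)
          \<and> (\<forall>y. (\<forall>i. y $ i \<ge> 0) \<longrightarrow> qp_obj Q h xs \<le> qp_obj Q h y)
          \<and> mu_step Q h \<delta> xs = xs
          \<and> (\<lambda>k. qp_obj Q h (x k)) \<longlonglongrightarrow> qp_obj Q h xs)"
proof -
  note pd = assms(1) and dpos = assms(2) and x0 = assms(3) and xs = assms(4)
  have sym: "transpose Q = Q" using pd by (simp add: pos_def_mat_def)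
  let ?F = "qp_obj Q h"
  let ?T = "mu_step Q h \<delta>"
  have pos: "\<forall>i. x k $ i > 0" for k
  proof (induction k)
    case 0 thus ?case using x0 by simp
  next
    case (Suc k) show ?case by (simp add: xs step_pos[OF Suc.IH dpos])
  qed
  have dec: "?F (x (Suc k)) + \<delta> * (\<Sum>i\<in>UNIV. (x (Suc k) $ i - x k $ i)^2 / x k $ i) \<le> ?F (x k)" for k
    using descent[OF sym dpos pos[of k], of h] xs by simp
  have sumnn: "(\<Sum>i\<in>UNIV. (x (Suc k) $ i - x k $ i)^2 / x k $ i) \<ge> 0" for k
    using pos[of k] by (intro sum_nonneg) (simp add: less_imp_le)
  have mono: "?F (x (Suc k)) \<le> ?F (x k)" for k
    using dec[of k] sumnn[of k] dpos by (smt (verit) mult_nonneg_nonneg)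
  have strict: "x (Suc k) \<noteq> x k \<Longrightarrow> ?F (x (Suc k)) < ?F (x k)" for k
    using strict_descent[OF sym dpos pos[of k], of h] xs by simp
  have decs: "decseq (\<lambda>k. ?F (x k))" using mono by (simp add: decseq_SucI)
  have Fle0: "?F (x k) \<le> ?F (x 0)" for k using decs by (simp add: decseq_def)
  obtain l where l: "l > 0" "\<forall>z. z \<bullet> (Q *v z) \<ge> l * (norm z)^2" using coercive[OF pd] by blast
  define C where "C = ?F (x 0)"
  define R where "R = max 1 ((2 * norm h + 2 * \<bar>C\<bar>) / l)"
  have Rpos: "R > 0" by (simp add: R_def)
  have bnd: "norm (x k) \<le> R" for k
  proof -
    let ?r = "norm (x k)"
    have "l * ?r^2 \<le> x k \<bullet> (Q *v x k)" using l by blast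
    moreover have "x k \<bullet> h \<le> ?r * norm h" by (rule norm_cauchy_schwarz)
    moreover have "?F (x k) \<le> C" using Fle0 by (simp add: C_def)
    ultimately have q: "l * ?r^2 \<le> 2 * ?r * norm h + 2 * \<bar>C\<bar>" unfolding qp_obj_def by linarith
    show ?thesis
    proof (cases "?r \<le> 1")
      case True thus ?thesis by (simp add: R_def)
    next
      case False
      hence "2 * \<bar>C\<bar> \<le> ?r * (2 * \<bar>C\<bar>)" by (simp add: mult_le_cancel_right1)
      hence "l * ?r * ?r \<le> ?r * (2 * norm h + 2 * \<bar>C\<bar>)" using q
        by (simp add: power2_eq_square algebra_simps)
      moreover have "l * ?r * ?r = ?r * (l * ?r)" by (simp add: mult.commute)
      ultimately have "?r * (l * ?r) \<le> ?r * (2 * norm h + 2 * \<bar>C\<bar>)" by simp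
      moreover have "?r > 0" using False by linarith
      ultimately have "l * ?r \<le> 2 * norm h + 2 * \<bar>C\<bar>"
        by (rule mult_left_le_imp_le)
      hence "?r \<le> (2 * norm h + 2 * \<bar>C\<bar>) / l" using l(1) by (simp add: field_simps)
      thus ?thesis by (simp add: R_def)
    qed
  qed
  have compR: "x k $ i \<le> R" for k i
    using component_le_norm_cart[of "x k" i] bnd[of k] by linarith
  have bdd: "bounded (range x)" using bnd by (auto simp: bounded_iff)
  have Flow: "?F (x k) \<ge> - (R * norm h)" for k
  proof -
    have "x k \<bullet> (Q *v x k) \<ge> 0" by (rule psd[OF pd])
    moreover have "x k \<bullet> h \<le> norm (x k) * norm h" by (rule norm_cauchy_schwarz)
    moreover have "norm (x k) * norm h \<le> R * norm h" using bnd[of k] by (simp add: mult_right_mono)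
    ultimately show ?thesis unfolding qp_obj_def by linarith
  qed
  obtain L where L: "(\<lambda>k. ?F (x k)) \<longlonglongrightarrow> L" using decseq_convergent[OF decs, of "- (R * norm h)"] Flow by blast
  have stepsq: "(norm (x (Suc k) - x k))^2 \<le> (R / \<delta>) * (?F (x k) - ?F (x (Suc k)))" for k
  proof -
    have "(norm (x (Suc k) - x k))^2 = (x (Suc k) - x k) \<bullet> (x (Suc k) - x k)"
      by (rule dot_square_norm[symmetric])
    also have "\<dots> = (\<Sum>i\<in>UNIV. (x (Suc k) $ i - x k $ i)^2)"
      by (simp add: inner_vec_def inner_real_def power2_eq_square)
    also have "\<dots> \<le> (\<Sum>i\<in>UNIV. R * ((x (Suc k) $ i - x k $ i)^2 / x k $ i))"
    proof (rule sum_mono)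
      fix i
      have p: "x k $ i > 0" using pos by blast
      have "(x (Suc k) $ i - x k $ i)^2 = x k $ i * ((x (Suc k) $ i - x k $ i)^2 / x k $ i)" using p by simp
      also have "\<dots> \<le> R * ((x (Suc k) $ i - x k $ i)^2 / x k $ i)"
        by (rule mult_right_mono) (use compR p in \<open>simp_all add: less_imp_le\<close>)
      finally show "(x (Suc k) $ i - x k $ i)^2 \<le> R * ((x (Suc k) $ i - x k $ i)^2 / x k $ i)" .
    qed
    also have "\<dots> = R * (\<Sum>i\<in>UNIV. (x (Suc k) $ i - x k $ i)^2 / x k $ i)" by (simp add: sum_distrib_left)
    also have "\<dots> \<le> (R / \<delta>) * (?F (x k) - ?F (x (Suc k)))"
    proof -
      have "\<delta> * (\<Sum>i\<in>UNIV. (x (Suc k) $ i - x k $ i)^2 / x k $ i) \<le> ?F (x k) - ?F (x (Suc k))"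
        using dec[of k] by linarith
      hence "(\<Sum>i\<in>UNIV. (x (Suc k) $ i - x k $ i)^2 / x k $ i) \<le> (?F (x k) - ?F (x (Suc k))) / \<delta>"
        using dpos by (simp add: field_simps)
      hence "R * (\<Sum>i\<in>UNIV. (x (Suc k) $ i - x k $ i)^2 / x k $ i) \<le> R * ((?F (x k) - ?F (x (Suc k))) / \<delta>)"
        using Rpos by (intro mult_left_mono) simp_all
      thus ?thesis by simp
    qed
    finally show ?thesis .
  qed
  have steps0: "(\<lambda>k. x (Suc k) - x k) \<longlonglongrightarrow> 0"
  proof -
    have a: "(\<lambda>k. (R / \<delta>) * (?F (x k) - ?F (x (Suc k)))) \<longlonglongrightarrow> (R / \<delta>) * (L - L)"
      by (intro tendsto_intros L LIMSEQ_Suc[OF L])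
    have b: "(\<lambda>k. (norm (x (Suc k) - x k))^2) \<longlonglongrightarrow> 0"
      by (rule tendsto_sandwich[where f = "\<lambda>_. 0" and h = "\<lambda>k. (R / \<delta>) * (?F (x k) - ?F (x (Suc k)))"])
         (use a stepsq in auto)
    have "(\<lambda>k. sqrt ((norm (x (Suc k) - x k))^2)) \<longlonglongrightarrow> sqrt 0"
      by (intro tendsto_intros b)
    hence "(\<lambda>k. norm (x (Suc k) - x k)) \<longlonglongrightarrow> 0" by simp
    thus ?thesis by (simp add: tendsto_norm_zero_iff)
  qed
  define P where "P = {p. (\<forall>i. p $ i \<ge> 0) \<and> ?T p = p}"
  have finP: "finite P" using finite_fixed[OF pd dpos, of h] by (simp add: P_def)
  have LP: "q \<in> P" if r: "strict_mono r" and c: "(x \<circ> r) \<longlonglongrightarrow> q" for r q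
  proof -
    have c': "(\<lambda>j. x (r j)) \<longlonglongrightarrow> q" using c by (simp add: o_def)
    have qnn: "\<forall>i. q $ i \<ge> 0"
    proof
      fix i
      have "(\<lambda>j. x (r j) $ i) \<longlonglongrightarrow> q $ i" by (intro tendsto_vec_nth c')
      moreover have "\<exists>N. \<forall>n\<ge>N. 0 \<le> x (r n) $ i" using pos by (auto intro: less_imp_le)
      ultimately show "q $ i \<ge> 0" by (rule LIMSEQ_le_const)
    qed
    have a: "(\<lambda>j. ?T (x (r j))) \<longlonglongrightarrow> ?T q" by (rule lim_step[OF c' dpos qnn])
    have "((\<lambda>k. x (Suc k) - x k) \<circ> r) \<longlonglongrightarrow> 0" by (rule LIMSEQ_subseq_LIMSEQ[OF steps0 r])
    hence "(\<lambda>j. x (r j) + (x (Suc (r j)) - x (r j))) \<longlonglongrightarrow> q + 0"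
      by (intro tendsto_add c') (simp add: o_def)
    hence "(\<lambda>j. ?T (x (r j))) \<longlonglongrightarrow> q" by (simp add: xs)
    hence "?T q = q" using a LIMSEQ_unique by blast
    thus ?thesis using qnn by (simp add: P_def)
  qed
  have claim: "eventually (\<lambda>k. \<exists>q\<in>P. dist (x k) q < e) sequentially" if e: "e > 0" for e
  proof (rule ccontr)
    assume ne: "\<not> eventually (\<lambda>k. \<exists>q\<in>P. dist (x k) q < e) sequentially"
    let ?B = "{k. \<forall>q\<in>P. dist (x k) q \<ge> e}"
    have "infinite ?B"
      unfolding infinite_nat_iff_unbounded_le using ne by (force simp: eventually_sequentially not_less)
    from infinite_enumerate[OF this] obtain r :: "nat \<Rightarrow> nat" where r: "strict_mono r" "\<forall>n. r n \<in> ?B"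
      by blast
    have "bounded (range (x \<circ> r))" using bdd by (rule bounded_subset) auto
    then obtain q r2 where r2: "strict_mono r2" "((x \<circ> r) \<circ> r2) \<longlonglongrightarrow> q"
      using bounded_imp_convergent_subsequence by blast
    have qP: "q \<in> P" using LP[of "r \<circ> r2" q] r2 strict_mono_o[OF r(1) r2(1)] by (simp add: o_assoc)
    have "eventually (\<lambda>j. dist (((x \<circ> r) \<circ> r2) j) q < e) sequentially" using r2(2) e by (rule tendstoD)
    then obtain j where "dist (x (r (r2 j))) q < e" by (auto simp: eventually_sequentially)
    moreover have "r (r2 j) \<in> ?B" using r by blast
    ultimately show False using qP by force
  qed
  obtain r0 where r0: "r0 > 0" "\<forall>p\<in>P. \<forall>q\<in>P. p \<noteq> q \<longrightarrow> r0 \<le> dist p q"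
    using sep_finite[OF finP] by blast
  define \<epsilon> where "\<epsilon> = r0 / 3"
  have epos: "\<epsilon> > 0" using r0 by (simp add: \<epsilon>_def)
  have ev: "eventually (\<lambda>k. (\<exists>q\<in>P. dist (x k) q < \<epsilon>) \<and> dist (x (Suc k)) (x k) < \<epsilon>) sequentially"
  proof (rule eventually_conj)
    show "eventually (\<lambda>k. \<exists>q\<in>P. dist (x k) q < \<epsilon>) sequentially" by (rule claim[OF epos])
    have "eventually (\<lambda>k. dist (x (Suc k) - x k) 0 < \<epsilon>) sequentially" using steps0 epos by (rule tendstoD)
    thus "eventually (\<lambda>k. dist (x (Suc k)) (x k) < \<epsilon>) sequentially" by (simp add: dist_norm)
  qed
  then obtain N where N: "\<And>k. k \<ge> N \<Longrightarrow> (\<exists>q\<in>P. dist (x k) q < \<epsilon>) \<and> dist (x (Suc k)) (x k) < \<epsilon>"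
    by (auto simp: eventually_sequentially)
  obtain p where pP: "p \<in> P" and p0: "dist (x N) p < \<epsilon>" using N[of N] by blast
  have stay: "dist (x (N + m)) p < \<epsilon>" for m
  proof (induction m)
    case 0 thus ?case using p0 by simp
  next
    case (Suc m)
    let ?k = "N + m"
    obtain q where q: "q \<in> P" "dist (x (Suc ?k)) q < \<epsilon>" using N[of "Suc ?k"] by auto
    have st: "dist (x (Suc ?k)) (x ?k) < \<epsilon>" using N[of ?k] by auto
    have "dist p q \<le> dist p (x (Suc ?k)) + dist (x (Suc ?k)) q" by (rule dist_triangle)
    also have "dist p (x (Suc ?k)) \<le> dist p (x ?k) + dist (x ?k) (x (Suc ?k))" by (rule dist_triangle)
    finally have "dist p q < r0" using Suc.IH st q(2) by (simp add: dist_commute \<epsilon>_def)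
    hence "p = q" using r0(2) pP q(1) by force
    thus ?case using q(2) by simp
  qed
  have conv: "x \<longlonglongrightarrow> p"
    unfolding lim_sequentially
  proof (intro allI impI)
    fix e :: real assume e: "e > 0"
    obtain M where M: "\<And>k. k \<ge> M \<Longrightarrow> \<exists>q\<in>P. dist (x k) q < min e \<epsilon>"
      using claim[of "min e \<epsilon>"] e epos by (auto simp: eventually_sequentially)
    show "\<exists>no. \<forall>n\<ge>no. dist (x n) p < e"
    proof (intro exI allI impI)
      fix n assume n: "max M N \<le> n"
      obtain q where q: "q \<in> P" "dist (x n) q < min e \<epsilon>" using M[of n] n by auto
      have "dist (x n) p < \<epsilon>" using stay[of "n - N"] n by simp
      moreover have "dist (x n) q < \<epsilon>" using q(2) by simp
      moreover have "dist p q \<le> dist p (x n) + dist (x n) q" by (rule dist_triangle)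
      moreover have "dist p (x n) = dist (x n) p" by (rule dist_commute)
      ultimately have "dist p q < r0" using r0(1) unfolding \<epsilon>_def by linarith
      hence "p = q" using r0(2) pP q(1) by force
      thus "dist (x n) p < e" using q(2) by simp
    qed
  qed
  have pnn: "\<forall>i. p $ i \<ge> 0" and pfix: "?T p = p" using pP by (auto simp: P_def)
  have gz: "\<forall>i. p $ i = 0 \<or> gr Q h p $ i = 0" using pfix fixed_iff_vec[OF dpos pnn] by blast
  have kkt: "gr Q h p $ i \<ge> 0" if pi: "p $ i = 0" for i
  proof (rule ccontr)
    assume "\<not> gr Q h p $ i \<ge> 0"
    hence g: "gr Q h p $ i < 0" by simp
    have Dp: "denr Q h \<delta> p $ i > 0" using den_ge[OF pnn] dpos by (metis order_less_le_trans)
    have "numr Q h \<delta> p $ i = denr Q h \<delta> p $ i - gr Q h p $ i"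
      using num_minus_den[of Q h \<delta> p i] by simp
    hence "numr Q h \<delta> p $ i > denr Q h \<delta> p $ i" using g by simp
    hence rho: "numr Q h \<delta> p $ i / denr Q h \<delta> p $ i > 1" using Dp by simp
    have "eventually (\<lambda>k. numr Q h \<delta> (x k) $ i / denr Q h \<delta> (x k) $ i > 1) sequentially"
      using order_tendstoD(1)[OF lim_ratio[OF conv dpos pnn] rho] .
    then obtain M where M: "\<And>k. k \<ge> M \<Longrightarrow> numr Q h \<delta> (x k) $ i / denr Q h \<delta> (x k) $ i > 1"
      by (auto simp: eventually_sequentially)
    have grow: "x M $ i \<le> x (M + m) $ i" for m
    proof (induction m)
      case 0 thus ?case by simp
    next
      case (Suc m)
      have "x (M + m) $ i \<le> x (M + m) $ i * (numr Q h \<delta> (x (M+m)) $ i / denr Q h \<delta> (x (M+m)) $ i)"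
      proof -
        have "x (M + m) $ i * 1 \<le> x (M + m) $ i * (numr Q h \<delta> (x (M+m)) $ i / denr Q h \<delta> (x (M+m)) $ i)"
          using M[of "M + m"] pos[of "M + m"] by (intro mult_left_mono) (auto intro: less_imp_le)
        thus ?thesis by simp
      qed
      also have "\<dots> = x (Suc (M + m)) $ i" by (simp add: xs mu_step_nth)
      finally show ?case using Suc.IH by simp
    qed
    have "(\<lambda>k. x k $ i) \<longlonglongrightarrow> p $ i" by (intro tendsto_vec_nth conv)
    moreover have "\<exists>N. \<forall>n\<ge>N. x M $ i \<le> x n $ i"
      using grow by (metis le_add_diff_inverse)
    ultimately have "x M $ i \<le> p $ i" by (rule LIMSEQ_le_const)
    moreover have "x M $ i > 0" using pos[of M] by blast
    ultimately show False using pi by simp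
  qed
  have gmin: "\<forall>y. (\<forall>i. y $ i \<ge> 0) \<longrightarrow> ?F p \<le> ?F y"
  proof (intro allI impI)
    fix y :: "real^'n" assume y: "\<forall>i. y $ i \<ge> 0"
    have "\<forall>i. (p $ i = 0 \<and> gr Q h p $ i \<ge> 0) \<or> gr Q h p $ i = 0" using gz kkt by blast
    thus "?F p \<le> ?F y" using kkt_min[OF pd _ y] by blast
  qed
  have "(\<lambda>k. ?F (x k)) \<longlonglongrightarrow> ?F p" by (rule lim_obj[OF conv])
  hence "\<exists>xs. (\<forall>i. xs $ i \<ge> 0) \<and> (\<forall>y. (\<forall>i. y $ i \<ge> 0) \<longrightarrow> ?F xs \<le> ?F y)
          \<and> ?T xs = xs \<and> (\<lambda>k. ?F (x k)) \<longlonglongrightarrow> ?F xs"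
    using pnn gmin pfix by blast
  thus ?thesis using pos mono strict by blast
qed

end
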